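(* For every finite preordered set $C$ and every prime power $q$, $\rho_C(q)=\rho_{C^*}(q)$. In particular, for every tuple $(l_1,\dots,l_s)$ of nonnegative integers, $\rho_{(l_1,\dots,l_s)}(q)=\rho_{(l_s,\dots,l_1)}(q)$.
   Context: A preorder on a finite set $C$ is a reflexive transitive relation $\preccurlyeq$. Its dual $C^*$ is $C$ with $x\preccurlyeq' y$ iff $y\preccurlyeq x$. $M^C(q)$ is the ring of $C\times C$ matrices $(x_{ij})$ over $\mathbb{F}_q$ with $x_{ij}=0$ unless $i\preccurlyeq j$; $P^C(q)$ is its group of invertible elements and $N^C(q)$ its set of nilpotent elements; $\rho_C(q)$ is the number of orbits of $P^C(q)$ on $N^C(q)$ under conjugation. For a tuple $\mathbf l=(l_1,\dots,l_s)$, $\rho_{\mathbf l}(q)=\rho_C(q)$ for $C$ a disjoint union of blocks $B_1,\dots,B_s$ with $|B_i|=l_i$ and $x\preccurlyeq y$ iff $x\in B_i,y\in B_j$ with $i\le j$; equivalently, $\rho_{\mathbf l}(q)$ is the number of conjugacy orbits of invertible block upper triangular matrices with diagonal blocks of sizes $l_1,\dots,l_s$ on the nilpotent such matrices. *)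

theory Defs
  imports Main
begin

definition incidence_mats :: "'c set \<Rightarrow> ('c \<Rightarrow> 'c \<Rightarrow> bool) \<Rightarrow> ('c \<Rightarrow> 'c \<Rightarrow> 'a::field) set" where
  "incidence_mats C le = {X. \<forall>i j. X i j \<noteq> 0 \<longrightarrow> i \<in> C \<and> j \<in> C \<and> le i j}"

definition mmul :: "'c set \<Rightarrow> ('c \<Rightarrow> 'c \<Rightarrow> 'a::field) \<Rightarrow> ('c \<Rightarrow> 'c \<Rightarrow> 'a) \<Rightarrow> ('c \<Rightarrow> 'c \<Rightarrow> 'a)" where
  "mmul C X Y = (\<lambda>i j. \<Sum>k\<in>C. X i k * Y k j)"

definition mone :: "'c set \<Rightarrow> ('c \<Rightarrow> 'c \<Rightarrow> 'a::field)" where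
  "mone C = (\<lambda>i j. if i \<in> C \<and> i = j then 1 else 0)"

fun mpow :: "'c set \<Rightarrow> ('c \<Rightarrow> 'c \<Rightarrow> 'a::field) \<Rightarrow> nat \<Rightarrow> ('c \<Rightarrow> 'c \<Rightarrow> 'a)" where
  "mpow C X 0 = mone C"
| "mpow C X (Suc n) = mmul C X (mpow C X n)"

definition units_M :: "'c set \<Rightarrow> ('c \<Rightarrow> 'c \<Rightarrow> bool) \<Rightarrow> ('c \<Rightarrow> 'c \<Rightarrow> 'a::field) set" where
  "units_M C le = {X \<in> incidence_mats C le. \<exists>Y \<in> incidence_mats C le.
      mmul C X Y = mone C \<and> mmul C Y X = mone C}"

definition nilp_M :: "'c set \<Rightarrow> ('c \<Rightarrow> 'c \<Rightarrow> bool) \<Rightarrow> ('c \<Rightarrow> 'c \<Rightarrow> 'a::field) set" where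
  "nilp_M C le = {X \<in> incidence_mats C le. \<exists>n. mpow C X n = (\<lambda>i j. 0)}"

definition conj_orbit :: "'c set \<Rightarrow> ('c \<Rightarrow> 'c \<Rightarrow> bool) \<Rightarrow> ('c \<Rightarrow> 'c \<Rightarrow> 'a::field) \<Rightarrow> ('c \<Rightarrow> 'c \<Rightarrow> 'a) set" where
  "conj_orbit C le X = {Y. \<exists>g \<in> units_M C le. \<exists>h \<in> incidence_mats C le.
      mmul C g h = mone C \<and> mmul C h g = mone C \<and> Y = mmul C (mmul C g X) h}"

text \<open>rho_C(q) for the field 'a with q elements: number of P^C-orbits on N^C.\<close>
definition rho :: "'a::{field,finite} itself \<Rightarrow> 'c set \<Rightarrow> ('c \<Rightarrow> 'c \<Rightarrow> bool) \<Rightarrow> nat" where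
  "rho _ C le = card ((conj_orbit C le :: ('c \<Rightarrow> 'c \<Rightarrow> 'a) \<Rightarrow> _) ` nilp_M C le)"

text \<open>Block preorder for a tuple l = (l_1,...,l_s): elements (i,a) with i < s, a < l_i;
  (i,a) \<preccurlyeq> (j,b) iff i \<le> j.\<close>
definition block_set :: "nat list \<Rightarrow> (nat \<times> nat) set" where
  "block_set ls = {(i, a). i < length ls \<and> a < ls ! i}"

definition block_le :: "nat \<times> nat \<Rightarrow> nat \<times> nat \<Rightarrow> bool" where
  "block_le x y = (fst x \<le> fst y)"

definition rho_tuple :: "'a::{field,finite} itself \<Rightarrow> nat list \<Rightarrow> nat" where
  "rho_tuple T ls = rho T (block_set ls) block_le"

end

theory Submission
  imports Defs
begin

lemma mmul_assoc: "mmul C (mmul C X Y) Z = mmul C X (mmul C Y Z)"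
  unfolding mmul_def
proof (rule ext, rule ext)
  fix i j
  have "(\<Sum>k\<in>C. (\<Sum>l\<in>C. X i l * Y l k) * Z k j) = (\<Sum>k\<in>C. \<Sum>l\<in>C. X i l * Y l k * Z k j)"
    by (simp add: sum_distrib_right)
  also have "\<dots> = (\<Sum>l\<in>C. \<Sum>k\<in>C. X i l * Y l k * Z k j)" by (rule sum.swap)
  also have "\<dots> = (\<Sum>l\<in>C. X i l * (\<Sum>k\<in>C. Y l k * Z k j))"
    by (simp add: sum_distrib_left mult.assoc)
  finally show "(\<Sum>k\<in>C. (\<Sum>l\<in>C. X i l * Y l k) * Z k j) = (\<Sum>l\<in>C. X i l * (\<Sum>k\<in>C. Y l k * Z k j))" .
qed

definition supp :: "'c set \<Rightarrow> ('c \<Rightarrow> 'c \<Rightarrow> 'a::field) \<Rightarrow> bool" where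
  "supp C X = (\<forall>i j. X i j \<noteq> 0 \<longrightarrow> i \<in> C \<and> j \<in> C)"

lemma inc_supp: "X \<in> incidence_mats C le \<Longrightarrow> supp C X"
  unfolding incidence_mats_def supp_def by blast

lemma mone_right: assumes "finite C" "supp C X" shows "mmul C X (mone C) = X"
proof (rule ext, rule ext)
  fix i j
  have "mmul C X (mone C) i j = (\<Sum>k\<in>C. if k = j then X i k else 0)"
    unfolding mmul_def mone_def by (rule sum.cong) auto
  also have "\<dots> = X i j" using assms by (auto simp: supp_def)
  finally show "mmul C X (mone C) i j = X i j" .
qed

lemma mone_left: assumes "finite C" "supp C X" shows "mmul C (mone C) X = X"
proof (rule ext, rule ext)
  fix i j
  have "mmul C (mone C) X i j = (\<Sum>k\<in>C. if i = k then X k j else 0)"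
    unfolding mmul_def mone_def by (rule sum.cong) auto
  also have "\<dots> = X i j" using assms by (auto simp: supp_def)
  finally show "mmul C (mone C) X i j = X i j" .
qed

lemma mpow_Suc': assumes "finite C" "supp C X"
  shows "mpow C X (Suc n) = mmul C (mpow C X n) X"
proof (induction n)
  case 0
  then show ?case using assms by (simp add: mone_right mone_left)
next
  case (Suc n)
  have "mpow C X (Suc (Suc n)) = mmul C X (mmul C (mpow C X n) X)"
    using Suc by simp
  also have "\<dots> = mmul C (mpow C X (Suc n)) X" by (simp add: mmul_assoc)
  finally show ?case .
qed

locale hyp =
  fixes \<Phi> :: "('c \<Rightarrow> 'c \<Rightarrow> 'a::field) \<Rightarrow> ('c \<Rightarrow> 'c \<Rightarrow> 'a)"
    and C1 le1 C2 le2
  assumes fin1: "finite C1" and fin2: "finite C2"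
    and inc: "\<And>X. X \<in> incidence_mats C1 le1 \<Longrightarrow> \<Phi> X \<in> incidence_mats C2 le2"
    and one: "\<Phi> (mone C1) = mone C2"
    and zero: "\<Phi> (\<lambda>i j. 0) = (\<lambda>i j. 0)"
    and mul: "(\<forall>X Y. \<Phi> (mmul C1 X Y) = mmul C2 (\<Phi> X) (\<Phi> Y)) \<or>
              (\<forall>X Y. \<Phi> (mmul C1 X Y) = mmul C2 (\<Phi> Y) (\<Phi> X))"
begin

lemma pow: assumes "X \<in> incidence_mats C1 le1"
  shows "\<Phi> (mpow C1 X n) = mpow C2 (\<Phi> X) n"
proof (induction n)
  case 0 then show ?case by (simp add: one)
next
  case (Suc n)
  have s: "supp C2 (\<Phi> X)" using inc[OF assms] by (rule inc_supp)
  from mul show ?case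
  proof
    assume h: "\<forall>X Y. \<Phi> (mmul C1 X Y) = mmul C2 (\<Phi> X) (\<Phi> Y)"
    show ?case using Suc h by simp
  next
    assume h: "\<forall>X Y. \<Phi> (mmul C1 X Y) = mmul C2 (\<Phi> Y) (\<Phi> X)"
    show ?case using Suc h mpow_Suc'[OF fin2 s, of n] by simp
  qed
qed

lemma nilp: "X \<in> nilp_M C1 le1 \<Longrightarrow> \<Phi> X \<in> nilp_M C2 le2"
proof -
  assume "X \<in> nilp_M C1 le1"
  then have X: "X \<in> incidence_mats C1 le1" and "\<exists>n. mpow C1 X n = (\<lambda>i j. 0)"
    unfolding nilp_M_def by blast+
  then obtain n where n: "mpow C1 X n = (\<lambda>i j. 0)" by blast
  have "mpow C2 (\<Phi> X) n = (\<lambda>i j. 0)" using pow[OF X, of n] n zero by simp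
  then show ?thesis unfolding nilp_M_def using inc[OF X] by blast
qed

lemma orb: "\<Phi> ` conj_orbit C1 le1 X \<subseteq> conj_orbit C2 le2 (\<Phi> X)"
proof
  fix Z assume "Z \<in> \<Phi> ` conj_orbit C1 le1 X"
  then obtain W where W: "W \<in> conj_orbit C1 le1 X" and ZW: "Z = \<Phi> W" by (rule imageE)
  from W obtain g h where g: "g \<in> units_M C1 le1" and h: "h \<in> incidence_mats C1 le1"
    and gh: "mmul C1 g h = mone C1" and hg: "mmul C1 h g = mone C1"
    and Wd: "W = mmul C1 (mmul C1 g X) h"
    unfolding conj_orbit_def mem_Collect_eq by blast
  have Z: "Z = \<Phi> (mmul C1 (mmul C1 g X) h)" using ZW Wd by simp
  have gi: "g \<in> incidence_mats C1 le1" using g unfolding units_M_def by blast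
  have Pg: "\<Phi> g \<in> incidence_mats C2 le2" using inc gi by blast
  have Ph: "\<Phi> h \<in> incidence_mats C2 le2" using inc h by blast
  from mul show "Z \<in> conj_orbit C2 le2 (\<Phi> X)"
  proof
    assume m: "\<forall>X Y. \<Phi> (mmul C1 X Y) = mmul C2 (\<Phi> X) (\<Phi> Y)"
    have 1: "mmul C2 (\<Phi> g) (\<Phi> h) = mone C2" "mmul C2 (\<Phi> h) (\<Phi> g) = mone C2"
      by (simp_all only: m[rule_format, symmetric] gh hg one)
    have u: "\<Phi> g \<in> units_M C2 le2" unfolding units_M_def using Pg Ph 1 by blast
    have "Z = mmul C2 (mmul C2 (\<Phi> g) (\<Phi> X)) (\<Phi> h)"
      using Z by (simp only: m[rule_format])
    then show ?thesis unfolding conj_orbit_def mem_Collect_eq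
      apply (rule_tac bexI[OF _ u]) apply (rule_tac bexI[OF _ Ph]) using 1 by simp
  next
    assume m: "\<forall>X Y. \<Phi> (mmul C1 X Y) = mmul C2 (\<Phi> Y) (\<Phi> X)"
    have 1: "mmul C2 (\<Phi> g) (\<Phi> h) = mone C2" "mmul C2 (\<Phi> h) (\<Phi> g) = mone C2"
      by (simp_all only: m[rule_format, symmetric] gh hg one)
    have u: "\<Phi> h \<in> units_M C2 le2" unfolding units_M_def using Pg Ph 1 by blast
    have "Z = mmul C2 (mmul C2 (\<Phi> h) (\<Phi> X)) (\<Phi> g)"
      using Z by (simp only: m[rule_format] mmul_assoc)
    then show ?thesis unfolding conj_orbit_def mem_Collect_eq
      apply (rule_tac bexI[OF _ u]) apply (rule_tac bexI[OF _ Pg]) using 1 by simp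
  qed
qed

end

lemma rho_eq:
  fixes \<Phi> \<Psi> :: "('c \<Rightarrow> 'c \<Rightarrow> 'a::{field,finite}) \<Rightarrow> ('c \<Rightarrow> 'c \<Rightarrow> 'a)"
  assumes H1: "hyp \<Phi> C1 le1 C2 le2" and H2: "hyp \<Psi> C2 le2 C1 le1"
    and inv1: "\<And>X. \<Psi> (\<Phi> X) = X" and inv2: "\<And>Y::'c \<Rightarrow> 'c \<Rightarrow> 'a. \<Phi> (\<Psi> Y) = Y"
  shows "rho TYPE('a) C1 le1 = rho TYPE('a) C2 le2"
proof -
  interpret A: hyp \<Phi> C1 le1 C2 le2 by (rule H1)
  interpret B: hyp \<Psi> C2 le2 C1 le1 by (rule H2)
  have N: "\<Phi> ` nilp_M C1 le1 = nilp_M C2 le2"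
  proof
    show "\<Phi> ` nilp_M C1 le1 \<subseteq> nilp_M C2 le2" using A.nilp by (rule image_subsetI)
    show "nilp_M C2 le2 \<subseteq> \<Phi> ` nilp_M C1 le1"
    proof
      fix Y :: "'c \<Rightarrow> 'c \<Rightarrow> 'a" assume "Y \<in> nilp_M C2 le2"
      then have "\<Psi> Y \<in> nilp_M C1 le1" by (rule B.nilp)
      then show "Y \<in> \<Phi> ` nilp_M C1 le1" using inv2[of Y] by (metis image_eqI)
    qed
  qed
  have O: "conj_orbit C2 le2 (\<Phi> X) = \<Phi> ` conj_orbit C1 le1 X" for X
  proof
    show "\<Phi> ` conj_orbit C1 le1 X \<subseteq> conj_orbit C2 le2 (\<Phi> X)" by (rule A.orb)
    have "\<Psi> ` conj_orbit C2 le2 (\<Phi> X) \<subseteq> conj_orbit C1 le1 X"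
      using B.orb[of "\<Phi> X"] unfolding inv1 .
    then have "\<Phi> ` \<Psi> ` conj_orbit C2 le2 (\<Phi> X) \<subseteq> \<Phi> ` conj_orbit C1 le1 X" by blast
    then show "conj_orbit C2 le2 (\<Phi> X) \<subseteq> \<Phi> ` conj_orbit C1 le1 X"
      unfolding image_image inv2 by simp
  qed
  have injP: "inj \<Phi>" by (metis injI inv1)
  have "(conj_orbit C2 le2 :: _ \<Rightarrow> ('c \<Rightarrow> 'c \<Rightarrow> 'a) set) ` nilp_M C2 le2
      = (image \<Phi>) ` (conj_orbit C1 le1 ` nilp_M C1 le1)"
    unfolding N[symmetric] image_comp by (rule image_cong) (simp_all add: O)
  moreover have "inj (image \<Phi>)" unfolding inj_def using inj_image_eq_iff[OF injP] by blast
  ultimately show ?thesis unfolding rho_def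
    by (simp add: card_image inj_on_subset)
qed


lemma transp_hyp:
  assumes "finite C"
  shows "hyp (\<lambda>(X::'c \<Rightarrow> 'c \<Rightarrow> 'a::field) i j. X j i) C le C (\<lambda>x y. le y x)"
proof (rule hyp.intro)
  show "finite C" by (rule assms)
  show "finite C" by (rule assms)
  show "(\<lambda>i j. X j i) \<in> incidence_mats C (\<lambda>x y. le y x)" if "X \<in> incidence_mats C le" for X :: "'c \<Rightarrow> 'c \<Rightarrow> 'a"
    using that unfolding incidence_mats_def by auto
  show "(\<lambda>i j. mone C j i) = (mone C :: 'c \<Rightarrow> 'c \<Rightarrow> 'a)"
    unfolding mone_def by (intro ext) auto
  show "(\<lambda>i j. 0) = (\<lambda>i j. 0::'a)" by simp
  show "(\<forall>X Y. (\<lambda>i j. mmul C X Y j i) = mmul C (\<lambda>i j. X j i) (\<lambda>i j. Y j i)) \<or>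
    (\<forall>X Y. (\<lambda>i j. mmul C X Y j i) = mmul C (\<lambda>i j. Y j i) (\<lambda>i j. (X::'c \<Rightarrow> 'c \<Rightarrow> 'a) j i))"
    unfolding mmul_def by (rule disjI2) (auto simp: mult.commute)
qed

lemma transp_rho:
  assumes "finite C"
  shows "rho TYPE('a::{field,finite}) C le = rho TYPE('a) C (\<lambda>x y. le y x)"
  by (rule rho_eq[OF transp_hyp[OF assms] transp_hyp[OF assms, of "\<lambda>x y. le y x"]]) simp_all

lemma reidx_hyp:
  assumes inv: "\<And>x. \<sigma> (\<sigma> x) = x" and memb: "\<And>x. x \<in> C2 \<longleftrightarrow> \<sigma> x \<in> C1"
    and lerel: "\<And>x y. x \<in> C2 \<Longrightarrow> y \<in> C2 \<Longrightarrow> le1 (\<sigma> x) (\<sigma> y) \<longleftrightarrow> le2 x y"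
    and f1: "finite C1" and f2: "finite C2"
  shows "hyp (\<lambda>(X::'c \<Rightarrow> 'c \<Rightarrow> 'a::field) x y. X (\<sigma> x) (\<sigma> y)) C1 le1 C2 le2"
proof
  show "finite C1" "finite C2" by (rule f1, rule f2)
  show "(\<lambda>x y. X (\<sigma> x) (\<sigma> y)) \<in> incidence_mats C2 le2" if "X \<in> incidence_mats C1 le1" for X :: "'c \<Rightarrow> 'c \<Rightarrow> 'a"
  proof -
    have "i \<in> C2 \<and> j \<in> C2 \<and> le2 i j" if "X (\<sigma> i) (\<sigma> j) \<noteq> 0" for i j
    proof -
      have "\<sigma> i \<in> C1 \<and> \<sigma> j \<in> C1 \<and> le1 (\<sigma> i) (\<sigma> j)"
        using \<open>X \<in> incidence_mats C1 le1\<close> that unfolding incidence_mats_def by blast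
      then show ?thesis using memb lerel by blast
    qed
    then show ?thesis unfolding incidence_mats_def by blast
  qed
  have "mone C1 (\<sigma> x) (\<sigma> y) = (mone C2 x y :: 'a)" for x y
  proof -
    have "(\<sigma> x = \<sigma> y) = (x = y)" by (metis inv)
    then show ?thesis unfolding mone_def using memb by simp
  qed
  then show "(\<lambda>x y. mone C1 (\<sigma> x) (\<sigma> y)) = (mone C2 :: 'c \<Rightarrow> 'c \<Rightarrow> 'a)"
    by (intro ext)
  show "(\<lambda>x y. 0) = (\<lambda>x y. 0::'a)" by simp
  have im: "\<sigma> ` C2 = C1"
  proof
    show "\<sigma> ` C2 \<subseteq> C1" using memb by blast
    show "C1 \<subseteq> \<sigma> ` C2"
    proof
      fix x assume "x \<in> C1"
      then have "\<sigma> x \<in> C2" using memb inv by simp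
      then show "x \<in> \<sigma> ` C2" using inv[of x] by (metis image_eqI)
    qed
  qed
  have inj: "inj_on \<sigma> C2" by (metis inj_onI inv)
  have eq: "mmul C1 X Y (\<sigma> x) (\<sigma> y) = mmul C2 (\<lambda>x y. X (\<sigma> x) (\<sigma> y)) (\<lambda>x y. Y (\<sigma> x) (\<sigma> y)) x y"
    for X Y :: "'c \<Rightarrow> 'c \<Rightarrow> 'a" and x y
    unfolding mmul_def im[symmetric] sum.reindex[OF inj] by (simp add: inv)
  show "(\<forall>X Y. (\<lambda>x y. mmul C1 (X::'c \<Rightarrow> 'c \<Rightarrow> 'a) Y (\<sigma> x) (\<sigma> y)) =
      mmul C2 (\<lambda>x y. X (\<sigma> x) (\<sigma> y)) (\<lambda>x y. Y (\<sigma> x) (\<sigma> y))) \<or>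
    (\<forall>X Y. (\<lambda>x y. mmul C1 X Y (\<sigma> x) (\<sigma> y)) =
      mmul C2 (\<lambda>x y. Y (\<sigma> x) (\<sigma> y)) (\<lambda>x y. (X::'c \<Rightarrow> 'c \<Rightarrow> 'a) (\<sigma> x) (\<sigma> y)))"
    apply (intro disjI1 allI ext) by (rule eq)
qed

definition sig :: "nat \<Rightarrow> nat \<times> nat \<Rightarrow> nat \<times> nat" where
  "sig s x = (if fst x < s then (s - 1 - fst x, snd x) else x)"

lemma sig_inv: "sig s (sig s x) = x"
  unfolding sig_def by (cases x) auto

lemma sig_mem: "x \<in> block_set ls \<longleftrightarrow> sig (length ls) x \<in> block_set (rev ls)"
  unfolding sig_def block_set_def by (cases x) (auto simp: rev_nth)

lemma sig_mem': "x \<in> block_set (rev ls) \<longleftrightarrow> sig (length ls) x \<in> block_set ls"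
  using sig_mem[of "sig (length ls) x" ls] sig_inv by simp

lemma sig_le: "fst x < s \<Longrightarrow> fst y < s \<Longrightarrow> block_le (sig s x) (sig s y) \<longleftrightarrow> block_le y x"
  unfolding sig_def block_le_def by auto

lemma block_fin: "finite (block_set ls)"
proof -
  have "block_set ls = (SIGMA i:{..<length ls}. {..<ls!i})" unfolding block_set_def by auto
  then show ?thesis by simp
qed

lemma block_fst: "x \<in> block_set ls \<Longrightarrow> fst x < length ls"
  unfolding block_set_def by auto

lemma rev_rho: "rho_tuple TYPE('a::{field,finite}) ls = rho_tuple TYPE('a) (rev ls)"
proof -
  let ?s = "sig (length ls)"
  have h1: "hyp (\<lambda>(X::nat\<times>nat \<Rightarrow> nat\<times>nat \<Rightarrow> 'a) x y. X (?s x) (?s y)) (block_set (rev ls)) block_le (block_set ls) (\<lambda>x y. block_le y x)"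
    by (rule reidx_hyp[OF sig_inv sig_mem _ block_fin block_fin]) (simp add: sig_le block_fst)
  have h2: "hyp (\<lambda>(X::nat\<times>nat \<Rightarrow> nat\<times>nat \<Rightarrow> 'a) x y. X (?s x) (?s y)) (block_set ls) (\<lambda>x y. block_le y x) (block_set (rev ls)) block_le"
  proof (rule reidx_hyp)
    fix x y assume "x \<in> block_set (rev ls)" "y \<in> block_set (rev ls)"
    then have "fst x < length ls" "fst y < length ls" using block_fst[of _ "rev ls"] by auto
    then show "block_le (?s y) (?s x) \<longleftrightarrow> block_le x y" by (simp add: sig_le)
  qed (rule sig_inv, rule sig_mem', rule block_fin, rule block_fin)
  have "rho TYPE('a) (block_set (rev ls)) block_le = rho TYPE('a) (block_set ls) (\<lambda>x y. block_le y x)"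
    by (rule rho_eq[OF h1 h2]) (simp_all add: sig_inv)
  also have "\<dots> = rho TYPE('a) (block_set ls) block_le"
    by (rule transp_rho[OF block_fin, symmetric])
  finally show ?thesis unfolding rho_tuple_def by simp
qed

theorem mainTheorem16:
  fixes C :: "'c set" and le :: "'c \<Rightarrow> 'c \<Rightarrow> bool"
  assumes "finite C"
    and "\<forall>x\<in>C. le x x"
    and "\<forall>x\<in>C. \<forall>y\<in>C. \<forall>z\<in>C. le x y \<longrightarrow> le y z \<longrightarrow> le x z"
  shows "rho TYPE('a::{field,finite}) C le = rho TYPE('a) C (\<lambda>x y. le y x)
    \<and> (\<forall>ls :: nat list. rho_tuple TYPE('a) ls = rho_tuple TYPE('a) (rev ls))"
  using transp_rho[OF assms(1)] rev_rho by blast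

end
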